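(* Let $p = p_{AB}$ be a probability distribution on $A\times B$ with $|A| = |B| = d$, and write $\eta = d_H^2(p\|p_A\times p_B)$. Then $I(A:B)_p\le\eta\cdot O(\log(d/\eta))$.
   Context: $p_A,p_B$ are the marginals of $p$. The squared Hellinger distance is $d_H^2(p\|q) = \sum_i(\sqrt{p_i}-\sqrt{q_i})^2$. $I(A:B)_p = \sum_{a,b}p(a,b)\ln\frac{p(a,b)}{p_A(a)p_B(b)}$. The $O(\cdot)$ hides a universal constant. *)

theory Defs
  imports Complex_Main
begin

definition is_joint_dist :: "'a set \<Rightarrow> 'b set \<Rightarrow> ('a \<Rightarrow> 'b \<Rightarrow> real) \<Rightarrow> bool" where
  "is_joint_dist A B p \<longleftrightarrow> (\<forall>a\<in>A. \<forall>b\<in>B. p a b \<ge> 0) \<and> (\<Sum>a\<in>A. \<Sum>b\<in>B. p a b) = 1"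

definition marg_A :: "'b set \<Rightarrow> ('a \<Rightarrow> 'b \<Rightarrow> real) \<Rightarrow> 'a \<Rightarrow> real" where
  "marg_A B p a = (\<Sum>b\<in>B. p a b)"

definition marg_B :: "'a set \<Rightarrow> ('a \<Rightarrow> 'b \<Rightarrow> real) \<Rightarrow> 'b \<Rightarrow> real" where
  "marg_B A p b = (\<Sum>a\<in>A. p a b)"

definition hellinger_sq_prod :: "'a set \<Rightarrow> 'b set \<Rightarrow> ('a \<Rightarrow> 'b \<Rightarrow> real) \<Rightarrow> real" where
  "hellinger_sq_prod A B p =
     (\<Sum>a\<in>A. \<Sum>b\<in>B. (sqrt (p a b) - sqrt (marg_A B p a * marg_B A p b))^2)"

text \<open>Mutual information I(A:B)_p (natural log; terms with p(a,b)=0 vanish).\<close>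
definition mutual_info :: "'a set \<Rightarrow> 'b set \<Rightarrow> ('a \<Rightarrow> 'b \<Rightarrow> real) \<Rightarrow> real" where
  "mutual_info A B p =
     (\<Sum>a\<in>A. \<Sum>b\<in>B. p a b * ln (p a b / (marg_A B p a * marg_B A p b)))"

end

theory Submission
  imports Defs
begin
lemma term_bound:
  fixes p q t :: real
  assumes p0: "p \<ge> 0" and pq: "q \<ge> p\<^sup>2" and t0: "t > 0" and t1: "t \<le> 1"
  shows "p * ln (p / q) - p + q \<le> 5 * (sqrt p - sqrt q)\<^sup>2 + 4 * (sqrt p - sqrt q)\<^sup>2 * ln (1/t) + t"
proof -
  have L0: "ln (1/t) \<ge> 0" using t0 t1 by simp
  have q0: "q \<ge> 0" using pq by (smt (verit) zero_le_power2)
  show ?thesis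
  proof (cases "p = 0")
    case True
    then show ?thesis using q0 L0 t0 by (simp add: mult_nonneg_nonneg)
  next
    case False
    hence pp: "p > 0" using p0 by simp
    hence qp: "q > 0" using pq by (smt (verit) zero_less_power2)
    define s where "s = sqrt p"
    define u where "u = sqrt q"
    have s0: "s > 0" and u0: "u > 0" using pp qp s_def u_def by auto
    have ps: "p = s\<^sup>2" and qu: "q = u\<^sup>2" using p0 q0 s_def u_def by auto
    have hnn: "0 \<le> 4 * (sqrt p - sqrt q)\<^sup>2 * ln (1/t)" using L0 by simp
    show ?thesis
    proof (cases "p \<le> 4 * q")
      case True
      have su: "s \<le> 2 * u"
      proof -
        have "sqrt p \<le> sqrt (4*q)" using True by simp
        also have "sqrt (4*q) = 2 * u" by (simp add: u_def real_sqrt_mult)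
        finally show ?thesis by (simp add: s_def)
      qed
      have "ln (p/q) = 2 * ln (s/u)" using s0 u0 ps qu
        by (simp add: power_divide[symmetric] ln_realpow)
      also have "\<dots> \<le> 2 * (s/u - 1)" using ln_le_minus_one[of "s/u"] s0 u0 by simp
      finally have l: "ln (p/q) \<le> 2 * (s/u - 1)" .
      have "p * ln (p/q) \<le> p * (2 * (s/u - 1))" using l pp by (simp add: mult_left_mono)
      hence "p * ln (p/q) - p + q \<le> s\<^sup>2 * (2 * (s/u - 1)) - s\<^sup>2 + u\<^sup>2" using ps qu by simp
      also have "\<dots> = (s - u)\<^sup>2 * (2*s + u) / u" using u0
        by (simp add: field_simps power2_eq_square)
      also have "\<dots> \<le> (s - u)\<^sup>2 * (5 * u) / u"
        using su u0 by (intro divide_right_mono mult_left_mono) auto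
      also have "\<dots> = 5 * (s - u)\<^sup>2" using u0 by simp
      finally have "p * ln (p / q) - p + q \<le> 5 * (sqrt p - sqrt q)\<^sup>2" using s_def u_def by simp
      then show ?thesis using hnn t0 by linarith
    next
      case False
      have su: "s > 2 * u"
      proof -
        have "sqrt (4*q) < sqrt p" using False by simp
        moreover have "sqrt (4*q) = 2 * u" by (simp add: u_def real_sqrt_mult)
        ultimately show ?thesis by (simp add: s_def)
      qed
      have a: "s/2 \<le> s - u" using su by simp
      have "(s/2)\<^sup>2 \<le> (s - u)\<^sup>2" using power_mono[OF a, of 2] s0 by simp
      hence h: "p \<le> 4 * (s - u)\<^sup>2" using ps by (simp add: power_divide)
      have "ln (p/q) \<le> ln (1/p)" using pp qp pq by (simp add: power2_eq_square field_simps)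
      hence "p * ln (p/q) \<le> p * ln (1/p)" using pp by (simp add: mult_left_mono)
      moreover have "ln (1/p) \<le> ln (1/t) + (t/p - 1)"
      proof -
        have "ln (t/p) \<le> t/p - 1" using ln_le_minus_one[of "t/p"] pp t0 by simp
        moreover have "ln (t/p) = ln (1/p) - ln (1/t)" using pp t0 by (simp add: ln_div)
        ultimately show ?thesis by simp
      qed
      hence "p * ln (1/p) \<le> p * ln (1/t) + t - p" using pp by (simp add: field_simps mult_left_mono) 
      moreover have "p * ln (1/t) \<le> 4 * (s - u)\<^sup>2 * ln (1/t)" using h L0 by (simp add: mult_right_mono)
      moreover have "0 \<le> 5 * (sqrt p - sqrt q)\<^sup>2" by simp
      moreover have "4*(s-u)\<^sup>2*ln(1/t) = 4*(sqrt p - sqrt q)\<^sup>2*ln(1/t)" by (simp add: s_def u_def)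
      ultimately show ?thesis using False q0 by linarith
    qed
  qed
qed

lemma tangent32:
  fixes x c :: real assumes "x \<ge> 0" "c \<ge> 0"
  shows "x * sqrt x \<ge> c^3 + 3/2 * c * (x - c\<^sup>2)"
proof -
  define s where "s = sqrt x"
  have s0: "s \<ge> 0" and xs: "x = s\<^sup>2" using assms s_def by auto
  have "2*s^3 - 2*c^3 - 3 * c * (s\<^sup>2 - c\<^sup>2) = (s - c)\<^sup>2 * (2*s + c)"
    by (simp add: algebra_simps power2_eq_square power3_eq_cube)
  also have "\<dots> \<ge> 0" using s0 assms by simp
  finally have "s^3 \<ge> c^3 + 3/2 * c * (s\<^sup>2 - c\<^sup>2)" by linarith
  moreover have "x * sqrt x = s^3" using xs s_def by (simp add: power3_eq_cube power2_eq_square)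
  ultimately show ?thesis using xs by simp
qed

lemma sum_sq_zero:
  fixes f :: "'a \<Rightarrow> 'b \<Rightarrow> real"
  assumes "finite A" "finite B" "(\<Sum>a\<in>A. \<Sum>b\<in>B. (f a b)\<^sup>2) = 0" "a \<in> A" "b \<in> B"
  shows "f a b = 0"
proof -
  have "\<forall>a\<in>A. (\<Sum>b\<in>B. (f a b)\<^sup>2) = 0"
    using assms(3) by (subst (asm) sum_nonneg_eq_0_iff[OF assms(1)]) (auto intro: sum_nonneg)
  hence "(\<Sum>b\<in>B. (f a b)\<^sup>2) = 0" using assms(4) by blast
  hence "\<forall>b\<in>B. (f a b)\<^sup>2 = 0" by (subst (asm) sum_nonneg_eq_0_iff[OF assms(2)]) auto
  thus ?thesis using assms(5) by simp
qed

lemma main_bound: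
  fixes A B :: "nat set" and p :: "nat \<Rightarrow> nat \<Rightarrow> real"
  assumes fA: "finite A" and fB: "finite B" and cAB: "card A = card B" and jd: "is_joint_dist A B p"
  shows "mutual_info A B p \<le> 38 * hellinger_sq_prod A B p * ln (real (card A) / hellinger_sq_prod A B p)"
proof -
  define pA where "pA = marg_A B p"
  define pB where "pB = marg_B A p"
  define q where "q = (\<lambda>a b. pA a * pB b)"
  define \<eta> where "\<eta> = hellinger_sq_prod A B p"
  define d where "d = real (card A)"
  have p0: "\<And>a b. a \<in> A \<Longrightarrow> b \<in> B \<Longrightarrow> p a b \<ge> 0" using jd by (simp add: is_joint_dist_def)
  have p1: "(\<Sum>a\<in>A. \<Sum>b\<in>B. p a b) = 1" using jd by (simp add: is_joint_dist_def)
  have pA0: "\<And>a. a \<in> A \<Longrightarrow> pA a \<ge> 0" unfolding pA_def marg_A_def using p0 by (intro sum_nonneg) auto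
  have pB0: "\<And>b. b \<in> B \<Longrightarrow> pB b \<ge> 0" unfolding pB_def marg_B_def using p0 by (intro sum_nonneg) auto
  have ppA: "\<And>a b. a \<in> A \<Longrightarrow> b \<in> B \<Longrightarrow> p a b \<le> pA a"
    unfolding pA_def marg_A_def using p0 fB by (intro member_le_sum) auto
  have ppB: "\<And>a b. a \<in> A \<Longrightarrow> b \<in> B \<Longrightarrow> p a b \<le> pB b"
    unfolding pB_def marg_B_def using p0 fA by (intro member_le_sum) auto
  have q0: "\<And>a b. a \<in> A \<Longrightarrow> b \<in> B \<Longrightarrow> q a b \<ge> 0" using pA0 pB0 by (simp add: q_def)
  have qp2: "\<And>a b. a \<in> A \<Longrightarrow> b \<in> B \<Longrightarrow> q a b \<ge> (p a b)\<^sup>2"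
    unfolding q_def power2_eq_square using p0 ppA ppB pA0 pB0 by (intro mult_mono) auto
  have sA: "(\<Sum>a\<in>A. pA a) = 1" using p1 by (simp add: pA_def marg_A_def)
  have sB: "(\<Sum>b\<in>B. pB b) = 1" unfolding pB_def marg_B_def using p1 by (metis sum.swap)
  have sq: "(\<Sum>a\<in>A. \<Sum>b\<in>B. q a b) = 1"
  proof -
    have "(\<Sum>a\<in>A. \<Sum>b\<in>B. q a b) = (\<Sum>a\<in>A. pA a * (\<Sum>b\<in>B. pB b))"
      unfolding q_def by (simp only: sum_distrib_left)
    also have "\<dots> = 1" using sA sB by simp
    finally show ?thesis .
  qed
  have Ieq: "mutual_info A B p = (\<Sum>a\<in>A. \<Sum>b\<in>B. p a b * ln (p a b / q a b) - p a b + q a b)"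
  proof -
    have "(\<Sum>a\<in>A. \<Sum>b\<in>B. p a b * ln (p a b / q a b) - p a b + q a b)
        = (\<Sum>a\<in>A. \<Sum>b\<in>B. p a b * ln (p a b / q a b)) - (\<Sum>a\<in>A. \<Sum>b\<in>B. p a b) + (\<Sum>a\<in>A. \<Sum>b\<in>B. q a b)"
      by (simp only: sum.distrib sum_subtractf)
    also have "\<dots> = (\<Sum>a\<in>A. \<Sum>b\<in>B. p a b * ln (p a b / q a b))" using p1 sq by simp
    also have "\<dots> = mutual_info A B p" by (simp add: mutual_info_def q_def pA_def pB_def)
    finally show ?thesis by simp
  qed
  have etadef: "\<eta> = (\<Sum>a\<in>A. \<Sum>b\<in>B. (sqrt (p a b) - sqrt (q a b))\<^sup>2)"
    by (simp add: \<eta>_def hellinger_sq_prod_def q_def pA_def pB_def)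
  have eta0: "\<eta> \<ge> 0" unfolding etadef by (simp add: sum_nonneg)
  show ?thesis
  proof (cases "\<eta> = 0")
    case True
    have "\<And>a b. a \<in> A \<Longrightarrow> b \<in> B \<Longrightarrow> sqrt (p a b) - sqrt (q a b) = 0"
    proof -
      fix a b assume ab: "a \<in> A" "b \<in> B"
      have z: "(\<Sum>a\<in>A. \<Sum>b\<in>B. (sqrt (p a b) - sqrt (q a b))\<^sup>2) = 0" using True etadef by simp
      show "sqrt (p a b) - sqrt (q a b) = 0"
        by (rule sum_sq_zero[where f = "\<lambda>a b. sqrt (p a b) - sqrt (q a b)", OF fA fB z ab])
    qed
    hence "\<And>a b. a \<in> A \<Longrightarrow> b \<in> B \<Longrightarrow> p a b = q a b" by simp
    hence "mutual_info A B p = 0" unfolding Ieq by (intro sum.neutral ballI) auto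
    then show ?thesis using True \<eta>_def by simp
  next
    case False
    hence etap: "\<eta> > 0" using eta0 by simp
    have dB: "card B = card A" using cAB by simp
    have Ane: "A \<noteq> {}" using p1 by auto
    hence d1: "d \<ge> 1" using fA by (simp add: d_def Suc_le_eq card_gt_0_iff)
    have expand: "\<And>a b. a \<in> A \<Longrightarrow> b \<in> B \<Longrightarrow>
        (sqrt (p a b) - sqrt (q a b))\<^sup>2 = p a b + q a b - 2 * (sqrt (p a b) * sqrt (q a b))"
      using p0 q0 by (simp add: power2_diff)
    have eta2: "\<eta> = 2 - 2 * (\<Sum>a\<in>A. \<Sum>b\<in>B. sqrt (p a b) * sqrt (q a b))"
    proof -
      have "\<eta> = (\<Sum>a\<in>A. \<Sum>b\<in>B. p a b + q a b - 2 * (sqrt (p a b) * sqrt (q a b)))"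
        unfolding etadef using expand by (intro sum.cong refl) auto
      also have "\<dots> = 2 - 2 * (\<Sum>a\<in>A. \<Sum>b\<in>B. sqrt (p a b) * sqrt (q a b))"
        by (simp add: sum.distrib sum_subtractf p1 sq sum_distrib_left)
      finally show ?thesis .
    qed
    have lowpt: "\<And>a b. a \<in> A \<Longrightarrow> b \<in> B \<Longrightarrow> sqrt (p a b) * sqrt (q a b) \<ge> p a b * sqrt (pB b)"
    proof -
      fix a b assume ab: "a \<in> A" "b \<in> B"
      have e1: "sqrt (p a b) * sqrt (q a b) = sqrt (p a b * pA a) * sqrt (pB b)"
        by (simp add: q_def real_sqrt_mult)
      have "p a b * p a b \<le> p a b * pA a" using ab p0 ppA by (intro mult_left_mono) auto
      hence e2: "sqrt (p a b * p a b) \<le> sqrt (p a b * pA a)" by (rule real_sqrt_le_mono)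
      have e3: "sqrt (p a b * p a b) = p a b" using ab p0 by simp
      have "p a b * sqrt (pB b) \<le> sqrt (p a b * pA a) * sqrt (pB b)"
        using e2 e3 ab pB0 by (intro mult_right_mono) auto
      thus "sqrt (p a b) * sqrt (q a b) \<ge> p a b * sqrt (pB b)" using e1 by simp
    qed
    have "(\<Sum>a\<in>A. \<Sum>b\<in>B. sqrt (p a b) * sqrt (q a b)) \<ge> (\<Sum>a\<in>A. \<Sum>b\<in>B. p a b * sqrt (pB b))"
      using lowpt by (intro sum_mono) auto
    also have "(\<Sum>a\<in>A. \<Sum>b\<in>B. p a b * sqrt (pB b)) = (\<Sum>b\<in>B. pB b * sqrt (pB b))"
      by (simp add: sum.swap[of _ A B] pB_def marg_B_def sum_distrib_right)
    finally have lowS: "(\<Sum>a\<in>A. \<Sum>b\<in>B. sqrt (p a b) * sqrt (q a b)) \<ge> (\<Sum>b\<in>B. pB b * sqrt (pB b))" .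
    define c where "c = 1 / sqrt d"
    have c0: "c > 0" using d1 by (simp add: c_def)
    have dc: "d * c\<^sup>2 = 1" using d1 by (simp add: c_def power_divide)
    have "(\<Sum>b\<in>B. pB b * sqrt (pB b)) \<ge> (\<Sum>b\<in>B. c^3 + 3/2 * c * (pB b - c\<^sup>2))"
      using tangent32 pB0 c0 by (intro sum_mono) auto
    also have "(\<Sum>b\<in>B. c^3 + 3/2 * c * (pB b - c\<^sup>2)) = d * c^3 + 3/2 * c * (1 - d * c\<^sup>2)"
    proof -
      have "(\<Sum>b\<in>B. c^3 + 3/2 * c * (pB b - c\<^sup>2)) = (\<Sum>b\<in>B. c^3) + 3/2 * c * ((\<Sum>b\<in>B. pB b) - (\<Sum>b\<in>B. c\<^sup>2))"
        by (simp only: sum.distrib sum_distrib_left[symmetric] sum_subtractf)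
      also have "\<dots> = d * c^3 + 3/2 * c * (1 - d * c\<^sup>2)" by (simp add: sB d_def dB)
      finally show ?thesis .
    qed
    also have "\<dots> = c" using dc by (simp add: power3_eq_cube power2_eq_square algebra_simps)
    finally have "(\<Sum>b\<in>B. pB b * sqrt (pB b)) \<ge> c" .
    hence etac: "\<eta> \<le> 2 - 2 * c" using eta2 lowS by linarith
    have eta_le2: "\<eta> \<le> 2" using etac c0 by simp
    have d2: "d \<ge> 2"
    proof (rule ccontr)
      assume "\<not> d \<ge> 2"
      hence "card A < 2" by (simp add: d_def)
      hence "d = 1" using d1 unfolding d_def by linarith
      hence "c = 1" by (simp add: c_def)
      thus False using etac etap by simp
    qed
    have c_ge: "c \<ge> 1 / d"
    proof -
      have s1: "1 \<le> sqrt d" using d1 by simp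
      have "sqrt d * 1 \<le> sqrt d * sqrt d" using s1 by (intro mult_left_mono) auto
      hence "sqrt d \<le> d" using d1 by simp
      thus ?thesis using d1 by (simp add: c_def frac_le)
    qed
    have eta_23: "\<eta> \<le> 2 * d / 3"
    proof -
      have "2 - 2 / d \<le> 2 * d / 3"
      proof -
        have "(2 - 2/d) * d = 2*d - 2" using d1 by (simp add: field_simps)
        moreover have "2*d/3*d - (2*d - 2) = 2/3*((d-3/2)\<^sup>2) + 1/2" by (simp add: power2_eq_square field_simps)
        moreover have "0 \<le> (d-3/2)\<^sup>2" by simp
        ultimately have "(2 - 2/d) * d \<le> 2*d/3 * d" by linarith
        thus ?thesis using d1 by (simp add: mult_le_cancel_right)
      qed
      thus ?thesis using etac c_ge by linarith
    qed
    define M where "M = ln (d / \<eta>)"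
    have M13: "M \<ge> 1/3"
    proof -
      have "d / \<eta> \<ge> 3/2" using eta_23 etap by (simp add: field_simps)
      hence "ln (d/\<eta>) \<ge> ln (3/2)" using d1 etap by (subst ln_le_cancel_iff) auto
      moreover have "ln (3/2::real) \<ge> 1 - 1/(3/2)"
      proof -
        have "ln (2/3::real) \<le> 2/3 - 1" by (rule ln_le_minus_one) simp
        moreover have "ln (3/2::real) = - ln (2/3)" by (simp add: ln_div)
        ultimately show ?thesis by simp
      qed
      ultimately show ?thesis by (simp add: M_def)
    qed
    have lnd: "ln d \<le> 4 * M"
    proof -
      have "ln (d/\<eta>) = ln d - ln \<eta>" using d1 etap by (simp add: ln_div)
      moreover have "ln \<eta> \<le> ln 2" using etap eta_le2 by simp
      moreover have "ln (2::real) \<le> 1" using ln_le_minus_one[of 2] by simp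
      ultimately show ?thesis using M13 by (simp add: M_def)
    qed
    define t where "t = \<eta> / d\<^sup>2"
    have t0: "t > 0" using etap d1 by (simp add: t_def)
    have t1: "t \<le> 1"
    proof -
      have h2: "2 * d \<le> d * d" using d2 by (intro mult_right_mono) auto
      have "\<eta> \<le> d\<^sup>2" using h2 eta_le2 d2 unfolding power2_eq_square by linarith
      thus ?thesis using d1 by (simp add: t_def)
    qed
    have L: "ln (1/t) \<le> 5 * M"
    proof -
      have "ln (1/t) = ln (d * (d/\<eta>))" by (simp add: t_def power2_eq_square)
      also have "\<dots> = ln d + M" using d1 etap unfolding M_def by (subst ln_mult) auto
      finally show ?thesis using lnd by simp
    qed
    have "mutual_info A B p \<le> (\<Sum>a\<in>A. \<Sum>b\<in>B. 5 * (sqrt (p a b) - sqrt (q a b))\<^sup>2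
            + 4 * (sqrt (p a b) - sqrt (q a b))\<^sup>2 * ln (1/t) + t)"
      unfolding Ieq using term_bound p0 qp2 t0 t1 by (intro sum_mono) auto
    also have "\<dots> = 5 * \<eta> + 4 * \<eta> * ln (1/t) + d * d * t"
      by (simp add: sum.distrib etadef sum_distrib_left sum_distrib_right d_def dB)
    also have "d * d * t = \<eta>" using d1 by (simp add: t_def power2_eq_square)
    finally have "mutual_info A B p \<le> 6 * \<eta> + 4 * \<eta> * ln (1/t)" by simp
    also have "\<dots> \<le> 6 * \<eta> + 4 * \<eta> * (5 * M)" using L etap by simp
    also have "\<dots> \<le> 38 * \<eta> * M"
    proof -
      have "\<eta> * (1/3) \<le> \<eta> * M" using M13 etap by (intro mult_left_mono) auto
      thus ?thesis by (simp add: algebra_simps)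
    qed
    finally show ?thesis by (simp add: M_def \<eta>_def d_def)
  qed
qed

theorem corollary4p2:
  "\<exists>C::real. C > 0 \<and>
     (\<forall>(A::nat set) (B::nat set) (p::nat \<Rightarrow> nat \<Rightarrow> real).
        finite A \<and> finite B \<and> card A = card B \<and> is_joint_dist A B p \<longrightarrow>
        mutual_info A B p \<le>
          C * hellinger_sq_prod A B p * ln (real (card A) / hellinger_sq_prod A B p))"
proof (rule exI[of _ 38], intro conjI allI impI)
  fix A B :: "nat set" and p :: "nat \<Rightarrow> nat \<Rightarrow> real"
  assume "finite A \<and> finite B \<and> card A = card B \<and> is_joint_dist A B p"
  then show "mutual_info A B p \<le> 38 * hellinger_sq_prod A B p * ln (real (card A) / hellinger_sq_prod A B p)"
    using main_bound by blast
qed simp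

end
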